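(* Fix integers $z_1>z_2\ge0$ and $k\ge1$, and let $\mathcal{Q}_{z_1,z_2,k}$ be the set of $(z_1,z_2,k)$-asymmetric partitions. Then, as formal power series in $q$, \[\sum_{\lambda\in\mathcal{Q}_{z_1,z_2,k}}q^{|\lambda|}=\sum_{n\ge k}\frac{q^{z_2+z_1(n-1)+n+n(n-2)+k}}{(1-q^2)(1-q^4)\cdots(1-q^{2k-2})\,(1-q^{2k-1})(1-q^{2k+1})\cdots(1-q^{2n-1})}.\]
   Context: $|\lambda|$ is the size of $\lambda$. The Frobenius rank of $\mu$ is $r=\max\{j:\mu_j\ge j\}$, Frobenius coordinates $(\alpha\mid\beta)$, $\alpha_i=\mu_i-i$, $\beta_i=\mu'_i-i$. For $1\le k\le r$, $\mu$ is $(z_1,z_2,k)$-asymmetric if $\mu=(\alpha_1,\dots,\alpha_r\mid\alpha_1+z_1,\dots,\widehat{\alpha_k+z_1},\dots,\alpha_r+z_1,z_2)$ for some strict partition $\alpha$, the hat denoting omission. In the denominator, the factors are $(1-q^{2j})$ for $1\le j\le k-1$ and $(1-q^{2j-1})$ for $k\le j\le n$. *)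

theory Defs
  imports Complex_Main "HOL-Computational_Algebra.Formal_Power_Series"
begin

text \<open>A partition is a weakly decreasing list of positive natural numbers
  (its nonzero parts).  Parts are 1-indexed: part mu i = mu_i, and mu_i = 0
  for i beyond the length.\<close>

definition is_partition :: "nat list \<Rightarrow> bool" where
  "is_partition mu \<longleftrightarrow> sorted_wrt (\<ge>) mu \<and> 0 \<notin> set mu"

definition part :: "nat list \<Rightarrow> nat \<Rightarrow> nat" where
  "part mu i = (if 1 \<le> i \<and> i \<le> length mu then mu ! (i - 1) else 0)"

definition psize :: "nat list \<Rightarrow> nat" where
  "psize mu = sum_list mu"

definition conj_part :: "nat list \<Rightarrow> nat \<Rightarrow> nat" where
  "conj_part mu i = card {j. 1 \<le> j \<and> j \<le> length mu \<and> part mu j \<ge> i}"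

definition frob_rank :: "nat list \<Rightarrow> nat" where
  "frob_rank mu = Max (insert 0 {j. 1 \<le> j \<and> j \<le> length mu \<and> part mu j \<ge> j})"

definition frob_alpha :: "nat list \<Rightarrow> nat list" where
  "frob_alpha mu = map (\<lambda>i. part mu i - i) [1..<frob_rank mu + 1]"

definition frob_beta :: "nat list \<Rightarrow> nat list" where
  "frob_beta mu = map (\<lambda>i. conj_part mu i - i) [1..<frob_rank mu + 1]"

text \<open>mu is (z1,z2,k)-asymmetric: 1 \<le> k \<le> r and
  mu = (alpha_1,...,alpha_r | alpha_1+z1, ..., omit alpha_k+z1, ..., alpha_r+z1, z2).\<close>
definition asymmetric :: "nat \<Rightarrow> nat \<Rightarrow> nat \<Rightarrow> nat list \<Rightarrow> bool" where
  "asymmetric z1 z2 k mu \<longleftrightarrow>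
     is_partition mu \<and> 1 \<le> k \<and> k \<le> frob_rank mu \<and>
     sorted_wrt (>) (frob_alpha mu) \<and>
     frob_beta mu =
       map (\<lambda>a. a + z1) (take (k - 1) (frob_alpha mu) @ drop k (frob_alpha mu)) @ [z2]"

definition asym_set :: "nat \<Rightarrow> nat \<Rightarrow> nat \<Rightarrow> nat list set" where
  "asym_set z1 z2 k = {mu. asymmetric z1 z2 k mu}"

definition asym_gf :: "nat \<Rightarrow> nat \<Rightarrow> nat \<Rightarrow> rat fps" where
  "asym_gf z1 z2 k = Abs_fps (\<lambda>m. of_nat (card {mu \<in> asym_set z1 z2 k. psize mu = m}))"

definition rhs_term :: "nat \<Rightarrow> nat \<Rightarrow> nat \<Rightarrow> nat \<Rightarrow> rat fps" where
  "rhs_term z1 z2 k n =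
     fps_X ^ nat (int z2 + int z1 * (int n - 1) + int n + int n * (int n - 2) + int k) /
     ((\<Prod>j\<in>{1..<k}. 1 - fps_X ^ (2 * j)) * (\<Prod>j\<in>{k..n}. 1 - fps_X ^ (2 * j - 1)))"

end

theory Submission
  imports Defs
begin


definition wt :: "nat list \<Rightarrow> nat list \<Rightarrow> nat" where
  "wt a d = sum_list (map (\<lambda>(x,y). x*y) (zip a d))"

definition cnt :: "nat list \<Rightarrow> nat \<Rightarrow> nat" where
  "cnt a m = card {d. length d = length a \<and> wt a d = m}"

lemma wt_Nil[simp]: "wt [] d = 0" by (simp add: wt_def)
lemma wt_Cons[simp]: "wt (x#a) (y#d) = x*y + wt a d" by (simp add: wt_def)

lemma wt_ge: "0 \<notin> set a \<Longrightarrow> length d = length a \<Longrightarrow> y \<in> set d \<Longrightarrow> y \<le> wt a d"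
proof (induction a arbitrary: d)
  case Nil then show ?case by simp
next
  case (Cons x a)
  then obtain y0 d0 where d: "d = y0 # d0" by (cases d) auto
  show ?case
  proof (cases "y = y0")
    case True
    have "y0 \<le> x * y0" using Cons.prems by simp
    then have "y0 \<le> x*y0 + wt a d0" by linarith
    then show ?thesis using True d by simp
  next
    case False
    then have "y \<in> set d0" using Cons.prems d by simp
    then have "y \<le> wt a d0" using Cons d by simp
    then show ?thesis using d by simp
  qed
qed

lemma cnt_finite: "0 \<notin> set a \<Longrightarrow> finite {d. length d = length a \<and> wt a d = m}"
proof -
  assume a: "0 \<notin> set a"
  have "{d. length d = length a \<and> wt a d = m} \<subseteq> {d. set d \<subseteq> {..m} \<and> length d = length a}"
    using wt_ge[OF a] by fastforce
  moreover have "finite {d. set d \<subseteq> {..m} \<and> length d = length a}"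
    by (rule finite_lists_length_eq) simp
  ultimately show ?thesis by (rule finite_subset)
qed

lemma cnt_Nil: "cnt [] m = (if m = 0 then 1 else 0)"
proof -
  have "{d::nat list. length d = 0 \<and> wt [] d = m} = (if m = 0 then {[]} else {})" by auto
  then show ?thesis by (simp add: cnt_def)
qed

lemma cnt_Cons:
  assumes "0 \<notin> set (x#a)"
  shows "cnt (x#a) m = cnt a m + (if x \<le> m then cnt (x#a) (m - x) else 0)"
proof -
  let ?S = "\<lambda>a m. {d. length d = length a \<and> wt a d = m}"
  have fin: "finite (?S a m)" "finite (?S (x#a) (m - x))" using cnt_finite[OF assms] cnt_finite[of a] assms by auto
  have split: "?S (x#a) m = (\<lambda>d. 0 # d) ` ?S a m \<union>
      (if x \<le> m then (\<lambda>d. (Suc (hd d)) # tl d) ` ?S (x#a) (m - x) else {})"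
  proof (intro equalityI subsetI)
    fix d assume "d \<in> ?S (x#a) m"
    then obtain y d0 where d: "d = y # d0" "length d0 = length a" "x*y + wt a d0 = m"
      by (cases d) auto
    show "d \<in> (\<lambda>d. 0 # d) ` ?S a m \<union>
      (if x \<le> m then (\<lambda>d. (Suc (hd d)) # tl d) ` ?S (x#a) (m - x) else {})"
    proof (cases y)
      case 0 then show ?thesis using d by auto
    next
      case (Suc y')
      have "x \<le> m" using d Suc by simp
      moreover have "y' # d0 \<in> ?S (x#a) (m - x)" using d Suc by auto
      ultimately show ?thesis using d Suc by (auto intro!: image_eqI[where x="y' # d0"])
    qed
  next
    fix d assume "d \<in> (\<lambda>d. 0 # d) ` ?S a m \<union>
      (if x \<le> m then (\<lambda>d. (Suc (hd d)) # tl d) ` ?S (x#a) (m - x) else {})"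
    then show "d \<in> ?S (x#a) m"
    proof
      assume "d \<in> (\<lambda>d. 0 # d) ` ?S a m" then show ?thesis by auto
    next
      assume h: "d \<in> (if x \<le> m then (\<lambda>d. (Suc (hd d)) # tl d) ` ?S (x#a) (m - x) else {})"
      then have xm: "x \<le> m" by (auto split: if_splits)
      with h obtain e where e: "e \<in> ?S (x#a) (m - x)" "d = Suc (hd e) # tl e" by auto
      then obtain y e0 where "e = y # e0" by (cases e) auto
      then show ?thesis using e xm by auto
    qed
  qed
  have inj1: "inj_on (\<lambda>d. 0 # d) (?S a m)" by (auto intro: inj_onI)
  have inj2: "inj_on (\<lambda>d. (Suc (hd d)) # tl d) (?S (x#a) (m - x))"
  proof (rule inj_onI)
    fix d e assume "d \<in> ?S (x#a) (m - x)" "e \<in> ?S (x#a) (m - x)"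
      "Suc (hd d) # tl d = Suc (hd e) # tl e"
    then show "d = e" by (cases d; cases e) auto
  qed
  have disj: "(\<lambda>d. 0 # d) ` ?S a m \<inter> (\<lambda>d. (Suc (hd d)) # tl d) ` ?S (x#a) (m - x) = {}"
    by auto
  show ?thesis
  proof (cases "x \<le> m")
    case True
    have "card (?S (x#a) m) = card ((\<lambda>d. 0 # d) ` ?S a m) +
        card ((\<lambda>d. (Suc (hd d)) # tl d) ` ?S (x#a) (m - x))"
      using split True fin disj by (simp add: card_Un_disjoint)
    also have "\<dots> = cnt a m + cnt (x#a) (m - x)"
      using card_image[OF inj1] card_image[OF inj2] by (simp add: cnt_def)
    finally show ?thesis using True by (simp add: cnt_def)
  next
    case False
    then show ?thesis using split card_image[OF inj1] by (simp add: cnt_def)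
  qed
qed

lemma cnt_fps:
  assumes "0 \<notin> set a"
  shows "Abs_fps (\<lambda>m. of_nat (cnt a m) :: rat) * prod_list (map (\<lambda>x. 1 - fps_X ^ x) a) = 1"
  using assms
proof (induction a)
  case Nil
  show ?case by (intro fps_ext) (simp add: cnt_Nil)
next
  case (Cons x a)
  have "Abs_fps (\<lambda>m. of_nat (cnt (x#a) m) :: rat) * (1 - fps_X ^ x) = Abs_fps (\<lambda>m. of_nat (cnt a m))"
  proof (intro fps_ext)
    fix m
    show "fps_nth (Abs_fps (\<lambda>m. of_nat (cnt (x#a) m) :: rat) * (1 - fps_X ^ x)) m = fps_nth (Abs_fps (\<lambda>m. of_nat (cnt a m))) m"
      using cnt_Cons[OF Cons.prems, of m]
      by (simp add: algebra_simps fps_X_power_mult_nth)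
  qed
  then show ?case using Cons by (simp add: mult.assoc[symmetric])
qed


definition toa :: "nat list \<Rightarrow> nat list" where
  "toa d = map (\<lambda>i. sum_list (drop i d) + (length d - 1 - i)) [0..<length d]"

definition froma :: "nat list \<Rightarrow> nat list" where
  "froma al = map (\<lambda>i. al!i - (if Suc i < length al then Suc (al!(Suc i)) else 0)) [0..<length al]"

lemma sdec_gap:
  assumes "sorted_wrt (>) xs" "i \<le> j" "j < length xs"
  shows "xs!j + (j - i) \<le> xs!i"
  using assms(2,3)
proof (induction j rule: dec_induct)
  case base then show ?case by simp
next
  case (step j)
  have "xs!(Suc j) < xs!j" using assms(1) step by (simp add: sorted_wrt_iff_nth_less)
  moreover have "xs!j + (j - i) \<le> xs!i" using step by simp
  ultimately show ?case using step by linarith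
qed

lemma sdec_lower:
  assumes "sorted_wrt (>) xs" "i < length xs"
  shows "length xs - 1 - i \<le> xs!i"
proof -
  have "xs!(length xs - 1) + (length xs - 1 - i) \<le> xs!i"
    using sdec_gap[OF assms(1), of i "length xs - 1"] assms(2) by simp
  then show ?thesis by linarith
qed

lemma length_toa[simp]: "length (toa d) = length d" by (simp add: toa_def)
lemma length_froma[simp]: "length (froma d) = length d" by (simp add: froma_def)

lemma nth_toa: "i < length d \<Longrightarrow> toa d ! i = sum_list (drop i d) + (length d - 1 - i)"
  by (simp add: toa_def)

lemma sum_list_drop_le: "sum_list (drop n xs) \<le> sum_list (xs :: nat list)"
proof -
  have "sum_list xs = sum_list (take n xs) + sum_list (drop n xs)"
    by (metis append_take_drop_id sum_list_append)
  then show ?thesis by simp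
qed

lemma sum_list_drop_mono: "i \<le> j \<Longrightarrow> sum_list (drop j xs) \<le> sum_list (drop i (xs :: nat list))"
  using sum_list_drop_le[of "j - i" "drop i xs"] by simp

lemma sum_list_drop_Suc: "i < length xs \<Longrightarrow> sum_list (drop i xs) = xs!i + sum_list (drop (Suc i) (xs :: nat list))"
  by (simp add: Cons_nth_drop_Suc[symmetric])

lemma toa_sdec: "sorted_wrt (>) (toa d)"
proof -
  have "toa d ! j < toa d ! i" if "i < j" "j < length d" for i j
    using that sum_list_drop_mono[of i j d] by (simp add: nth_toa)
  then show ?thesis by (simp add: sorted_wrt_iff_nth_less)
qed

lemma froma_toa: "froma (toa d) = d"
proof (rule nth_equalityI)
  show "length (froma (toa d)) = length d" by simp
  fix i assume i: "i < length (froma (toa d))"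
  then have i': "i < length d" by simp
  show "froma (toa d) ! i = d ! i"
  proof (cases "Suc i < length d")
    case True
    then show ?thesis using i' sum_list_drop_Suc[OF i'] by (simp add: froma_def nth_toa)
  next
    case False
    then have "drop (Suc i) d = []" by simp
    then show ?thesis using False i' sum_list_drop_Suc[OF i'] by (simp add: froma_def nth_toa)
  qed
qed

lemma toa_froma_aux:
  assumes "sorted_wrt (>) al" "i < length al"
  shows "sum_list (drop i (froma al)) + (length al - 1 - i) = al ! i"
  using assms(2)
proof (induction "length al - i" arbitrary: i)
  case 0 then show ?case by simp
next
  case (Suc t)
  show ?case
  proof (cases "Suc i < length al")
    case True
    have IH: "sum_list (drop (Suc i) (froma al)) + (length al - 1 - Suc i) = al ! Suc i"
      using Suc True by simp
    have lt: "al ! Suc i < al ! i" using assms(1) True by (simp add: sorted_wrt_iff_nth_less)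
    have "sum_list (drop i (froma al)) = froma al ! i + sum_list (drop (Suc i) (froma al))"
      using sum_list_drop_Suc[of i "froma al"] Suc.prems by simp
    moreover have "froma al ! i = al ! i - Suc (al ! Suc i)" using True Suc.prems by (simp add: froma_def)
    ultimately show ?thesis using IH lt True by linarith
  next
    case False
    then have "drop (Suc i) (froma al) = []" by simp
    moreover have "froma al ! i = al ! i" using False Suc.prems by (simp add: froma_def)
    ultimately show ?thesis using False Suc.prems sum_list_drop_Suc[of i "froma al"] by simp
  qed
qed

lemma toa_froma:
  assumes "sorted_wrt (>) al" shows "toa (froma al) = al"
proof (rule nth_equalityI)
  show "length (toa (froma al)) = length al" by simp
  fix i assume "i < length (toa (froma al))"
  then have i: "i < length al" by simp
  show "toa (froma al) ! i = al ! i"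
    using toa_froma_aux[OF assms i] nth_toa[of i "froma al"] i by simp
qed

lemma bij_toa: "bij_betw toa {d. length d = n} {al. length al = n \<and> sorted_wrt (>) al}"
proof (rule bij_betw_byWitness[where f'=froma])
  show "\<forall>a\<in>{d. length d = n}. froma (toa a) = a" by (simp add: froma_toa)
  show "\<forall>a'\<in>{al. length al = n \<and> sorted_wrt (>) al}. toa (froma a') = a'" by (simp add: toa_froma)
  show "toa ` {d. length d = n} \<subseteq> {al. length al = n \<and> sorted_wrt (>) al}" by (auto simp: toa_sdec)
  show "froma ` {al. length al = n \<and> sorted_wrt (>) al} \<subseteq> {d. length d = n}" by auto
qed

lemma sum_list_drop_sum: "sum_list (drop i d) = (\<Sum>j\<in>{i..<length d}. d ! (j::nat))"
proof (induction d arbitrary: i)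
  case Nil then show ?case by simp
next
  case (Cons x d)
  show ?case
  proof (cases i)
    case 0
    then show ?thesis by (simp add: sum_list_sum_nth atLeast0LessThan)
  next
    case (Suc i')
    have "(\<Sum>j\<in>{Suc i'..<Suc (length d)}. (x#d) ! j) = (\<Sum>j\<in>{i'..<length d}. d ! j)"
      by (subst sum.shift_bounds_Suc_ivl) simp
    then show ?thesis using Cons Suc by simp
  qed
qed

lemma tri_sum: "(\<Sum>i<n. \<Sum>j\<in>{i..<n}. D j) = (\<Sum>j<n. Suc j * (D j :: nat))"
proof (induction n)
  case 0 then show ?case by simp
next
  case (Suc n)
  have "(\<Sum>i<Suc n. \<Sum>j\<in>{i..<Suc n}. D j) = (\<Sum>i<Suc n. (\<Sum>j\<in>{i..<n}. D j) + D n)"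
    by (intro sum.cong) auto
  also have "\<dots> = (\<Sum>i<n. \<Sum>j\<in>{i..<n}. D j) + Suc n * D n"
    by (simp add: sum.distrib)
  finally show ?case using Suc by simp
qed

lemma gauss2: "2 * (\<Sum>i<n. (n - 1 - i)) = n * (n - 1::nat)"
proof -
  have "(\<Sum>i<n. (n - 1 - i)) = (\<Sum>i<n. i)"
    using sum.nat_diff_reindex[of "\<lambda>i. i" n] by simp
  moreover have "2 * (\<Sum>i<n. i) = n * (n - 1::nat)"
    by (induction n) (auto simp: algebra_simps)
  ultimately show ?thesis by simp
qed

definition wts :: "nat \<Rightarrow> nat \<Rightarrow> nat list" where
  "wts k n = map (\<lambda>j. if j < k then 2*j else 2*j - 1) [1..<n+1]"

lemma length_wts[simp]: "length (wts k n) = n" by (simp add: wts_def)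

lemma nth_wts: "i < n \<Longrightarrow> wts k n ! i = (if Suc i < k then 2 * Suc i else 2 * Suc i - 1)"
  unfolding wts_def by (subst nth_map) (simp_all add: nth_upt del: upt_Suc)

lemma wt_sum: "length d = n \<Longrightarrow> wt (wts k n) d = (\<Sum>j<n. wts k n ! j * d ! j)"
  by (simp add: wt_def sum_list_sum_nth lessThan_atLeast0)

lemma weight_identity:
  assumes "length d = n" "1 \<le> k" "k \<le> n"
  shows "wt (wts k n) d + toa d ! (k - 1) + n * (n - 1) + k = 2 * sum_list (toa d) + n"
proof -
  define S where "S i = sum_list (drop i d)" for i
  have S: "S i = (\<Sum>j\<in>{i..<n}. d ! j)" for i using assms(1) by (simp add: S_def sum_list_drop_sum)
  have "sum_list (toa d) = (\<Sum>i<n. toa d ! i)"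
    using assms(1) by (simp add: sum_list_sum_nth lessThan_atLeast0)
  also have "\<dots> = (\<Sum>i<n. S i + (n - 1 - i))"
    by (rule sum.cong) (use assms(1) in \<open>auto simp: nth_toa S_def\<close>)
  finally have sa: "sum_list (toa d) = (\<Sum>i<n. S i) + (\<Sum>i<n. (n - 1 - i))"
    by (simp only: sum.distrib)
  have tk: "toa d ! (k - 1) = S (k - 1) + (n - k)" using assms by (simp add: nth_toa S_def)
  have w: "wt (wts k n) d = (\<Sum>j<n. (if Suc j < k then 2 * Suc j else 2 * Suc j - 1) * d ! j)"
    using assms(1) by (simp add: wt_sum nth_wts)
  have "wt (wts k n) d + S (k - 1) = (\<Sum>j<n. (if Suc j < k then 2 * Suc j else 2 * Suc j - 1) * d ! j + (if k - 1 \<le> j then d ! j else 0))"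
    unfolding w S by (simp add: sum.distrib sum.If_cases lessThan_atLeast0 Int_def) (rule sum.cong; auto)
  also have "\<dots> = (\<Sum>j<n. 2 * (Suc j * d ! j))"
    by (rule sum.cong) (auto simp: algebra_simps)
  also have "\<dots> = 2 * (\<Sum>i<n. S i)"
    using tri_sum[where n=n and D="\<lambda>j. d ! j"] by (simp add: S sum_distrib_left)
  finally have "wt (wts k n) d + S (k - 1) = 2 * (\<Sum>i<n. S i)" .
  then show ?thesis using sa tk gauss2[of n] assms by simp
qed




definition PP :: "nat \<Rightarrow> nat list \<Rightarrow> nat list \<Rightarrow> nat \<Rightarrow> nat \<Rightarrow> bool" where
  "PP n a b i j \<longleftrightarrow> (i \<le> j \<and> i \<le> n \<and> j \<le> a!(i-1) + i) \<or> (j < i \<and> j \<le> n \<and> i \<le> b!(j-1) + j)"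

lemma downset:
  assumes "finite T" "\<And>x y. x \<in> T \<Longrightarrow> 1 \<le> x \<and> (1 \<le> y \<longrightarrow> y \<le> x \<longrightarrow> y \<in> T)"
  shows "T = {1..card T}"
proof (cases "T = {}")
  case True then show ?thesis by simp
next
  case False
  define M where "M = Max T"
  have M: "M \<in> T" using False assms(1) by (simp add: M_def)
  have "T = {1..M}"
  proof
    show "T \<subseteq> {1..M}"
    proof
      fix x assume x: "x \<in> T"
      have "1 \<le> x" using assms(2)[OF x, of x] by simp
      moreover have "x \<le> M" unfolding M_def using x assms(1) by simp
      ultimately show "x \<in> {1..M}" by simp
    qed
    show "{1..M} \<subseteq> T"
    proof
      fix y assume "y \<in> {1..M}"
      then show "y \<in> T" using assms(2)[OF M, of y] by simp
    qed
  qed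
  then show ?thesis by simp
qed

lemma nat_eqI1: assumes "\<And>j. 1 \<le> j \<Longrightarrow> (j \<le> x \<longleftrightarrow> j \<le> (y::nat))" shows "x = y"
  using assms[of x] assms[of y] by (cases "x = 0"; cases "y = 0") auto

lemma part_pos: "is_partition mu \<Longrightarrow> (0 < part mu i \<longleftrightarrow> 1 \<le> i \<and> i \<le> length mu)"
proof -
  assume "is_partition mu"
  then have z: "0 \<notin> set mu" by (simp add: is_partition_def)
  show ?thesis
  proof (cases "1 \<le> i \<and> i \<le> length mu")
    case True
    then have "mu ! (i - 1) \<in> set mu" by (intro nth_mem) linarith
    then have "mu ! (i - 1) \<noteq> 0" using z by metis
    then show ?thesis using True by (simp add: part_def)
  next
    case False then show ?thesis by (auto simp: part_def)
  qed
qed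

lemma part_nth: "i < length mu \<Longrightarrow> mu ! i = part mu (Suc i)"
  by (simp add: part_def)

lemma part_mono:
  assumes "is_partition mu" "1 \<le> i" "i \<le> i'"
  shows "part mu i' \<le> part mu i"
proof (cases "i' \<le> length mu")
  case True
  have "sorted_wrt (\<ge>) mu" using assms(1) by (simp add: is_partition_def)
  then have "mu ! (i' - 1) \<le> mu ! (i - 1)"
    using True assms(2,3) by (cases "i = i'") (auto simp: sorted_wrt_iff_nth_less)
  then show ?thesis using True assms by (simp add: part_def)
next
  case False then show ?thesis by (simp add: part_def)
qed

lemma conj_iff:
  assumes mu: "is_partition mu" and "1 \<le> i" "1 \<le> j"
  shows "j \<le> part mu i \<longleftrightarrow> i \<le> conj_part mu j"
proof -
  define T where "T = {i'. 1 \<le> i' \<and> i' \<le> length mu \<and> j \<le> part mu i'}"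
  have fin: "finite T" unfolding T_def by (rule finite_subset[of _ "{..length mu}"]) auto
  have "T = {1..card T}"
  proof (rule downset[OF fin])
    fix x y assume "x \<in> T"
    then show "1 \<le> x \<and> (1 \<le> y \<longrightarrow> y \<le> x \<longrightarrow> y \<in> T)"
      unfolding T_def using part_mono[OF mu] by (auto intro: order_trans)
  qed
  moreover have "conj_part mu j = card T" by (simp add: conj_part_def T_def)
  moreover have "i \<in> T \<longleftrightarrow> j \<le> part mu i"
    using part_pos[OF mu, of i] assms unfolding T_def by auto
  ultimately show ?thesis using assms by (metis atLeastAtMost_iff)
qed

lemma rank_iff:
  assumes mu: "is_partition mu" and "1 \<le> i"
  shows "i \<le> frob_rank mu \<longleftrightarrow> i \<le> part mu i"
proof -
  define R where "R = {j. 1 \<le> j \<and> j \<le> length mu \<and> part mu j \<ge> j}"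
  have fin: "finite R" unfolding R_def by (rule finite_subset[of _ "{..length mu}"]) auto
  have R: "R = {1..card R}"
  proof (rule downset[OF fin])
    fix x y assume "x \<in> R"
    then show "1 \<le> x \<and> (1 \<le> y \<longrightarrow> y \<le> x \<longrightarrow> y \<in> R)"
      unfolding R_def using part_mono[OF mu] by (auto intro: order_trans)
  qed
  have "frob_rank mu = Max (insert 0 R)" by (simp add: frob_rank_def R_def)
  also have "\<dots> = card R"
  proof (rule Max_eqI)
    show "finite (insert 0 R)" using fin by simp
    fix y assume "y \<in> insert 0 R" then show "y \<le> card R" by (subst (asm) R) auto
  next
    show "card R \<in> insert 0 R" by (subst (2) R) auto
  qed
  finally have rk: "frob_rank mu = card R" .
  have "i \<in> R \<longleftrightarrow> i \<le> part mu i"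
    using part_pos[OF mu, of i] assms unfolding R_def by auto
  then show ?thesis using rk R assms by (metis atLeastAtMost_iff)
qed

lemma length_frob_alpha[simp]: "length (frob_alpha mu) = frob_rank mu"
  by (simp add: frob_alpha_def)
lemma length_frob_beta[simp]: "length (frob_beta mu) = frob_rank mu"
  by (simp add: frob_beta_def)
lemma nth_frob_alpha0: "i < frob_rank mu \<Longrightarrow> frob_alpha mu ! i = part mu (Suc i) - Suc i"
  unfolding frob_alpha_def by (subst nth_map) (simp_all del: upt_Suc)
lemma nth_frob_beta0: "i < frob_rank mu \<Longrightarrow> frob_beta mu ! i = conj_part mu (Suc i) - Suc i"
  unfolding frob_beta_def by (subst nth_map) (simp_all del: upt_Suc)
lemma nth_frob_alpha: "1 \<le> i \<Longrightarrow> i \<le> frob_rank mu \<Longrightarrow> frob_alpha mu ! (i-1) = part mu i - i"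
  using nth_frob_alpha0[of "i-1" mu] by simp
lemma nth_frob_beta: "1 \<le> i \<Longrightarrow> i \<le> frob_rank mu \<Longrightarrow> frob_beta mu ! (i-1) = conj_part mu i - i"
  using nth_frob_beta0[of "i-1" mu] by simp

lemma char_frob:
  assumes mu: "is_partition mu" and i: "1 \<le> i" and j: "1 \<le> j"
  shows "j \<le> part mu i \<longleftrightarrow> PP (frob_rank mu) (frob_alpha mu) (frob_beta mu) i j"
proof (cases "i \<le> j")
  case True
  have "j \<le> part mu i \<longleftrightarrow> (i \<le> frob_rank mu \<and> j \<le> frob_alpha mu ! (i-1) + i)"
  proof
    assume h: "j \<le> part mu i"
    then have r: "i \<le> frob_rank mu" using rank_iff[OF mu i] True by simp
    then show "i \<le> frob_rank mu \<and> j \<le> frob_alpha mu ! (i-1) + i"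
      using h i nth_frob_alpha[OF i, of mu] by simp
  next
    assume h: "i \<le> frob_rank mu \<and> j \<le> frob_alpha mu ! (i-1) + i"
    then have "i \<le> part mu i" using rank_iff[OF mu i] by simp
    then show "j \<le> part mu i" using h i nth_frob_alpha[OF i, of mu] by simp
  qed
  then show ?thesis using True by (simp add: PP_def)
next
  case False
  have "j \<le> part mu i \<longleftrightarrow> i \<le> conj_part mu j" using conj_iff[OF mu i j] .
  also have "\<dots> \<longleftrightarrow> (j \<le> frob_rank mu \<and> i \<le> frob_beta mu ! (j-1) + j)"
  proof
    assume h: "i \<le> conj_part mu j"
    then have "j \<le> conj_part mu j" using False by simp
    then have "j \<le> part mu j" using conj_iff[OF mu j j] by simp
    then have r: "j \<le> frob_rank mu" using rank_iff[OF mu j] by simp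
    then show "j \<le> frob_rank mu \<and> i \<le> frob_beta mu ! (j-1) + j"
      using h j nth_frob_beta[OF j, of mu] by simp
  next
    assume h: "j \<le> frob_rank mu \<and> i \<le> frob_beta mu ! (j-1) + j"
    then have "j \<le> part mu j" using rank_iff[OF mu j] by simp
    then have "j \<le> conj_part mu j" using conj_iff[OF mu j j] by simp
    then show "i \<le> conj_part mu j" using h j nth_frob_beta[OF j, of mu] by simp
  qed
  finally show ?thesis using False by (simp add: PP_def)
qed

lemma partition_eqI:
  assumes mu: "is_partition mu" and nu: "is_partition nu"
    and h: "\<And>i j. 1 \<le> i \<Longrightarrow> 1 \<le> j \<Longrightarrow> (j \<le> part mu i \<longleftrightarrow> j \<le> part nu i)"
  shows "mu = nu"
proof -
  have p: "part mu i = part nu i" if "1 \<le> i" for i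
    by (rule nat_eqI1) (use h that in auto)
  have l: "length mu = length nu"
  proof (rule ccontr)
    assume "length mu \<noteq> length nu"
    then consider "length mu < length nu" | "length nu < length mu" by linarith
    then show False
    proof cases
      case 1
      then have "0 < part nu (length nu)" "\<not> 0 < part mu (length nu)"
        using part_pos[OF nu, of "length nu"] part_pos[OF mu, of "length nu"] by auto
      then show False using p[of "length nu"] 1 by simp
    next
      case 2
      then have "0 < part mu (length mu)" "\<not> 0 < part nu (length mu)"
        using part_pos[OF nu, of "length mu"] part_pos[OF mu, of "length mu"] by auto
      then show False using p[of "length mu"] 2 by simp
    qed
  qed
  show ?thesis
    by (rule nth_equalityI) (use l p in \<open>auto simp: part_nth\<close>)
qed


definition cc :: "nat \<Rightarrow> nat list \<Rightarrow> nat \<Rightarrow> nat" where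
  "cc n b i = card {j\<in>{1..n}. i \<le> b!(j-1) + j}"

definition constr :: "nat \<Rightarrow> nat list \<Rightarrow> nat list \<Rightarrow> nat list" where
  "constr n a b = map (\<lambda>i. a!(i-1) + i) [1..<n+1] @ map (cc n b) [n+1..<b!0 + 2]"

locale frobdata =
  fixes n :: nat and a b :: "nat list"
  assumes n1: "1 \<le> n" and la: "length a = n" and lb: "length b = n"
    and sa: "sorted_wrt (>) a" and sb: "sorted_wrt (>) b"
begin

lemma a_mono: assumes "1 \<le> i" "i \<le> i'" "i' \<le> n" shows "a!(i'-1) + i' \<le> a!(i-1) + i"
proof -
  have h: "i-1 \<le> i'-1" "i'-1 < length a" using assms la by auto
  have "a!(i'-1) + ((i'-1)-(i-1)) \<le> a!(i-1)" by (rule sdec_gap[OF sa h])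
  then show ?thesis using assms by arith
qed
lemma b_mono: assumes "1 \<le> i" "i \<le> i'" "i' \<le> n" shows "b!(i'-1) + i' \<le> b!(i-1) + i"
proof -
  have h: "i-1 \<le> i'-1" "i'-1 < length b" using assms lb by auto
  have "b!(i'-1) + ((i'-1)-(i-1)) \<le> b!(i-1)" by (rule sdec_gap[OF sb h])
  then show ?thesis using assms by arith
qed
lemma a_low: assumes "1 \<le> i" "i \<le> n" shows "n \<le> a!(i-1) + i"
proof -
  have h: "i-1 < length a" using assms la by auto
  have "length a - 1 - (i-1) \<le> a!(i-1)" by (rule sdec_lower[OF sa h])
  then show ?thesis using assms la by arith
qed
lemma b_low: assumes "1 \<le> i" "i \<le> n" shows "n \<le> b!(i-1) + i"
proof -
  have h: "i-1 < length b" using assms lb by auto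
  have "length b - 1 - (i-1) \<le> b!(i-1)" by (rule sdec_lower[OF sb h])
  then show ?thesis using assms lb by arith
qed

lemma b0: "n \<le> b!0 + 1" using b_low[of 1] n1 by simp

lemma length_constr: "length (constr n a b) = b!0 + 1"
  using b0 n1 by (simp add: constr_def del: upt_Suc)

lemma cc_le: "cc n b i \<le> n"
proof -
  have "cc n b i \<le> card {1..n}" unfolding cc_def by (rule card_mono) auto
  then show ?thesis by simp
qed

lemma cc_iff: "1 \<le> j \<Longrightarrow> (j \<le> cc n b i \<longleftrightarrow> j \<le> n \<and> i \<le> b!(j-1) + j)"
proof -
  assume j: "1 \<le> j"
  define C where "C = {j\<in>{1..n}. i \<le> b!(j-1) + j}"
  have fin: "finite C" by (simp add: C_def)
  have "C = {1..card C}"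
  proof (rule downset[OF fin])
    fix x y assume x: "x \<in> C"
    show "1 \<le> x \<and> (1 \<le> y \<longrightarrow> y \<le> x \<longrightarrow> y \<in> C)"
    proof (intro conjI impI)
      show "1 \<le> x" using x by (simp add: C_def)
      assume y: "1 \<le> y" "y \<le> x"
      have "b!(x-1) + x \<le> b!(y-1) + y" using b_mono[OF y] x by (simp add: C_def)
      then show "y \<in> C" using x y by (auto simp: C_def)
    qed
  qed
  moreover have "cc n b i = card C" by (simp add: cc_def C_def)
  ultimately have "j \<le> cc n b i \<longleftrightarrow> j \<in> C" using j by (metis atLeastAtMost_iff)
  then show ?thesis using j by (simp add: C_def)
qed

lemma cc_big: "b!0 + 1 < i \<Longrightarrow> cc n b i = 0"
proof -
  assume i: "b!0 + 1 < i"
  have "\<not> (1 \<le> cc n b i)"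
  proof
    assume "1 \<le> cc n b i"
    then have "i \<le> b!0 + 1" using cc_iff[of 1 i] by simp
    then show False using i by simp
  qed
  then show ?thesis by simp
qed

lemma part_constr: "1 \<le> i \<Longrightarrow> part (constr n a b) i = (if i \<le> n then a!(i-1) + i else cc n b i)"
proof -
  assume i: "1 \<le> i"
  show ?thesis
  proof (cases "i \<le> n")
    case True
    have lt: "i - 1 < n" using True i by arith
    have "constr n a b ! (i - 1) = a!(i-1) + i"
      using lt i by (simp add: constr_def nth_append del: upt_Suc)
    then show ?thesis using True i length_constr b0 by (simp add: part_def)
  next
    case False
    show ?thesis
    proof (cases "i \<le> b!0 + 1")
      case True
      have lt: "\<not> i - 1 < n" "i - 1 - n < b!0 + 1 - n" using True False i by arith+
      have "constr n a b ! (i - 1) = cc n b i"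
        using True False i b0 lt by (simp add: constr_def nth_append del: upt_Suc)
      then show ?thesis using True False i by (simp add: part_def length_constr)
    next
      case F2: False
      then show ?thesis using False i cc_big by (simp add: part_def length_constr)
    qed
  qed
qed

lemma char_constr:
  assumes i: "1 \<le> i" and j: "1 \<le> j"
  shows "j \<le> part (constr n a b) i \<longleftrightarrow> PP n a b i j"
proof (cases "i \<le> n")
  case True
  show ?thesis
  proof (cases "i \<le> j")
    case True
    then show ?thesis using \<open>i \<le> n\<close> i by (simp add: part_constr PP_def)
  next
    case False
    have "i \<le> b!(j-1) + j" using b_low[OF j] \<open>i \<le> n\<close> False by simp
    then show ?thesis using \<open>i \<le> n\<close> i False by (simp add: part_constr PP_def)
  qed
next
  case False
  have "j \<le> part (constr n a b) i \<longleftrightarrow> j \<le> n \<and> i \<le> b!(j-1) + j"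
    using False i cc_iff[OF j] by (simp add: part_constr)
  then show ?thesis using False by (auto simp: PP_def)
qed

lemma part_constr_mono: "1 \<le> i \<Longrightarrow> i \<le> i' \<Longrightarrow> part (constr n a b) i' \<le> part (constr n a b) i"
proof -
  assume i: "1 \<le> i" "i \<le> i'"
  show ?thesis
  proof (cases "i' \<le> n")
    case True then show ?thesis using i a_mono[OF i True] by (simp add: part_constr)
  next
    case False
    show ?thesis
    proof (cases "i \<le> n")
      case True
      then show ?thesis using i False cc_le[of i'] a_low[OF i(1) True] by (simp add: part_constr)
    next
      case F2: False
      have "cc n b i' \<le> cc n b i" unfolding cc_def using i by (intro card_mono) auto
      then show ?thesis using i False F2 by (simp add: part_constr)
    qed
  qed
qed

lemma constr_partition: "is_partition (constr n a b)"
proof -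
  have s: "sorted_wrt (\<ge>) (constr n a b)"
    unfolding sorted_wrt_iff_nth_less
  proof (intro allI impI)
    fix p q assume "p < q" "q < length (constr n a b)"
    then show "constr n a b ! q \<le> constr n a b ! p"
      using part_constr_mono[of "Suc p" "Suc q"] by (simp add: part_nth)
  qed
  have z: "0 \<notin> set (constr n a b)"
  proof
    assume "0 \<in> set (constr n a b)"
    then obtain p where p: "p < length (constr n a b)" "constr n a b ! p = 0"
      by (auto simp: in_set_conv_nth)
    then have pp: "part (constr n a b) (Suc p) = 0" by (simp add: part_nth)
    show False
    proof (cases "Suc p \<le> n")
      case True then show False using pp by (simp add: part_constr)
    next
      case False
      have "Suc p \<le> b!0 + 1" using p length_constr by simp
      then have "1 \<le> cc n b (Suc p)" using cc_iff[of 1 "Suc p"] n1 by simp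
      then show False using pp False by (simp add: part_constr)
    qed
  qed
  show ?thesis using s z by (simp add: is_partition_def)
qed

lemma frob_constr:
  "frob_rank (constr n a b) = n \<and> frob_alpha (constr n a b) = a \<and> frob_beta (constr n a b) = b"
proof -
  let ?mu = "constr n a b"
  have mu: "is_partition ?mu" by (rule constr_partition)
  have ch: "\<And>i j. 1 \<le> i \<Longrightarrow> 1 \<le> j \<Longrightarrow> j \<le> part ?mu i \<longleftrightarrow> PP n a b i j"
    by (rule char_constr)
  have r: "frob_rank ?mu = n"
  proof (rule nat_eqI1)
    fix i :: nat assume i: "1 \<le> i"
    have "i \<le> frob_rank ?mu \<longleftrightarrow> i \<le> part ?mu i" by (rule rank_iff[OF mu i])
    also have "\<dots> \<longleftrightarrow> PP n a b i i" using ch[OF i i] .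
    also have "\<dots> \<longleftrightarrow> i \<le> n" by (auto simp: PP_def)
    finally show "i \<le> frob_rank ?mu \<longleftrightarrow> i \<le> n" .
  qed
  have pa: "part ?mu i = a!(i-1) + i" if i: "1 \<le> i" "i \<le> n" for i
  proof (rule nat_eqI1)
    fix j :: nat assume j: "1 \<le> j"
    have "j \<le> part ?mu i \<longleftrightarrow> PP n a b i j" by (rule ch[OF i(1) j])
    also have "\<dots> \<longleftrightarrow> j \<le> a!(i-1) + i"
    proof (cases "i \<le> j")
      case True then show ?thesis using i by (simp add: PP_def)
    next
      case False
      have "i \<le> b!(j-1) + j" using b_low[OF j] i False by simp
      then show ?thesis using i False by (simp add: PP_def)
    qed
    finally show "j \<le> part ?mu i \<longleftrightarrow> j \<le> a!(i-1) + i" .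
  qed
  have pb: "conj_part ?mu j = b!(j-1) + j" if j: "1 \<le> j" "j \<le> n" for j
  proof (rule nat_eqI1)
    fix i :: nat assume i: "1 \<le> i"
    have "i \<le> conj_part ?mu j \<longleftrightarrow> j \<le> part ?mu i" using conj_iff[OF mu i j(1)] by simp
    also have "\<dots> \<longleftrightarrow> PP n a b i j" by (rule ch[OF i j(1)])
    also have "\<dots> \<longleftrightarrow> i \<le> b!(j-1) + j"
    proof (cases "i \<le> j")
      case True
      have "j \<le> a!(i-1) + i" using a_low[OF i] j True by simp
      moreover have "i \<le> b!(j-1) + j" using True by simp
      ultimately show ?thesis using j True by (simp add: PP_def)
    next
      case False then show ?thesis using j by (simp add: PP_def)
    qed
    finally show "i \<le> conj_part ?mu j \<longleftrightarrow> i \<le> b!(j-1) + j" .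
  qed
  have "frob_alpha ?mu = a"
  proof (rule nth_equalityI)
    show "length (frob_alpha ?mu) = length a" using r la by simp
    fix p assume "p < length (frob_alpha ?mu)"
    then have p: "p < n" using r by simp
    show "frob_alpha ?mu ! p = a ! p"
      using nth_frob_alpha0[of p ?mu] r p pa[of "Suc p"] by simp
  qed
  moreover have "frob_beta ?mu = b"
  proof (rule nth_equalityI)
    show "length (frob_beta ?mu) = length b" using r lb by simp
    fix p assume "p < length (frob_beta ?mu)"
    then have p: "p < n" using r by simp
    show "frob_beta ?mu ! p = b ! p"
      using nth_frob_beta0[of p ?mu] r p pb[of "Suc p"] by simp
  qed
  ultimately show ?thesis using r by simp
qed

end


lemma card_filter_sum: "finite A \<Longrightarrow> card {x\<in>A. P x} = (\<Sum>x\<in>A. if P x then 1 else (0::nat))"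
  by (simp add: sum.inter_filter[symmetric])

lemma filter_ivl: "(B::nat) \<le> c \<Longrightarrow> {i\<in>{m..<c+1}. i \<le> B} = {m..<B+1}"
  by auto

lemma gauss_suc: "2 * (\<Sum>j<n. Suc j) = n * (n + 1::nat)"
  by (induction n) (auto simp: algebra_simps)

context frobdata
begin

lemma psize_constr: "psize (constr n a b) = n + sum_list a + sum_list b"
proof -
  define I where "I = {n+1..<b!0+2}"
  have s1: "sum_list (map (\<lambda>i. a!(i-1) + i) [1..<n+1]) = sum_list a + (\<Sum>j<n. Suc j)"
  proof -
    have "sum_list (map (\<lambda>i. a!(i-1) + i) [1..<n+1]) = (\<Sum>i\<in>{1..n}. a!(i-1) + i)"
      by (simp only: sum_set_upt_conv_sum_list_nat[symmetric] set_upt) (simp add: atLeastLessThanSuc_atLeastAtMost)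
    also have "\<dots> = (\<Sum>i<n. a!i + Suc i)" by (simp add: sum.atLeast1_atMost_eq)
    also have "\<dots> = (\<Sum>i<n. a!i) + (\<Sum>j<n. Suc j)" by (rule sum.distrib)
    also have "\<dots> = sum_list a + (\<Sum>j<n. Suc j)" using la by (simp add: sum_list_sum_nth lessThan_atLeast0)
    finally show ?thesis .
  qed
  have cardj: "card {i\<in>I. i \<le> b!(j-1) + j} = b!(j-1) + j - n" if j: "j \<in> {1..n}" for j
  proof -
    have j1: "1 \<le> j" "j \<le> n" using j by auto
    have "b!(j-1) + j \<le> b!(1-1) + 1" by (rule b_mono[OF _ j1]) simp
    then have "b!(j-1) + j \<le> b!0 + 1" by simp
    then have "{i\<in>I. i \<le> b!(j-1) + j} = {n+1..<b!(j-1) + j + 1}"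
      unfolding I_def using filter_ivl[of "b!(j-1) + j" "b!0 + 1" "n+1"] by simp
    then show ?thesis by simp
  qed
  have s2: "sum_list (map (cc n b) [n+1..<b!0 + 2]) + n * n = sum_list b + (\<Sum>j<n. Suc j)"
  proof -
    have "sum_list (map (cc n b) [n+1..<b!0 + 2]) = (\<Sum>i\<in>I. cc n b i)"
      by (simp only: sum_set_upt_conv_sum_list_nat[symmetric] set_upt I_def)
    also have "\<dots> = (\<Sum>i\<in>I. \<Sum>j\<in>{1..n}. if i \<le> b!(j-1) + j then 1 else 0)"
      unfolding cc_def by (intro sum.cong refl card_filter_sum) simp
    also have "\<dots> = (\<Sum>j\<in>{1..n}. \<Sum>i\<in>I. if i \<le> b!(j-1) + j then 1 else 0)"
      by (rule sum.swap)
    also have "\<dots> = (\<Sum>j\<in>{1..n}. b!(j-1) + j - n)"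
    proof (rule sum.cong)
      fix j assume j: "j \<in> {1..n}"
      have "finite I" by (simp add: I_def)
      then have "(\<Sum>i\<in>I. if i \<le> b!(j-1) + j then 1 else 0) = card {i\<in>I. i \<le> b!(j-1) + j}"
        by (rule card_filter_sum[symmetric])
      then show "(\<Sum>i\<in>I. if i \<le> b!(j-1) + j then 1 else 0) = b!(j-1) + j - n"
        using cardj[OF j] by simp
    qed simp
    finally have e: "sum_list (map (cc n b) [n+1..<b!0 + 2]) = (\<Sum>j\<in>{1..n}. b!(j-1) + j - n)" .
    have "(\<Sum>j\<in>{1..n}. b!(j-1) + j - n) + n * n = (\<Sum>j\<in>{1..n}. (b!(j-1) + j - n) + n)"
      by (simp add: sum.distrib)
    also have "\<dots> = (\<Sum>j\<in>{1..n}. b!(j-1) + j)"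
    proof (rule sum.cong)
      fix j assume "j \<in> {1..n}"
      then have "n \<le> b!(j-1) + j" using b_low by simp
      then show "b!(j-1) + j - n + n = b!(j-1) + j" by simp
    qed simp
    also have "\<dots> = (\<Sum>i<n. b!i + Suc i)" by (simp add: sum.atLeast1_atMost_eq)
    also have "\<dots> = (\<Sum>i<n. b!i) + (\<Sum>j<n. Suc j)" by (rule sum.distrib)
    also have "\<dots> = sum_list b + (\<Sum>j<n. Suc j)" using lb by (simp add: sum_list_sum_nth lessThan_atLeast0)
    finally have c: "(\<Sum>j\<in>{1..n}. b!(j-1) + j - n) + n * n = sum_list b + (\<Sum>j<n. Suc j)" .
    show ?thesis using c e by linarith
  qed
  have "psize (constr n a b) = sum_list (map (\<lambda>i. a!(i-1) + i) [1..<n+1]) + sum_list (map (cc n b) [n+1..<b!0 + 2])"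
    by (simp add: psize_def constr_def del: upt_Suc)
  then have "psize (constr n a b) + n * n = sum_list a + sum_list b + 2 * (\<Sum>j<n. Suc j)"
    using s1 s2 by linarith
  moreover have "2 * (\<Sum>j<n. Suc j) = n * n + n" using gauss_suc[of n] by (simp add: algebra_simps)
  ultimately show ?thesis by linarith
qed

end

definition betaof :: "nat \<Rightarrow> nat \<Rightarrow> nat \<Rightarrow> nat list \<Rightarrow> nat list" where
  "betaof z1 z2 k al = map (\<lambda>x. x + z1) (take (k-1) al @ drop k al) @ [z2]"

definition Phi :: "nat \<Rightarrow> nat \<Rightarrow> nat \<Rightarrow> nat \<Rightarrow> nat list \<Rightarrow> nat list" where
  "Phi z1 z2 k n al = constr n al (betaof z1 z2 k al)"

lemma sum_list_map_plus: "sum_list (map (\<lambda>x. x + c) ys) = sum_list ys + length ys * (c::nat)"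
  by (induction ys) auto

lemma betaof_props:
  assumes la: "length al = n" and sa: "sorted_wrt (>) al" and k: "1 \<le> k" "k \<le> n" and z: "z2 < z1"
  shows "length (betaof z1 z2 k al) = n" "sorted_wrt (>) (betaof z1 z2 k al)"
    "sum_list (betaof z1 z2 k al) + al!(k-1) = sum_list al + (n-1)*z1 + z2"
proof -
  show "length (betaof z1 z2 k al) = n" using la k by (simp add: betaof_def)
  have cross: "x > y" if hx: "x \<in> set (take (k-1) al)" and hy: "y \<in> set (drop k al)" for x y
  proof -
    obtain p where p: "p < length (take (k-1) al)" "take (k-1) al ! p = x"
      using hx unfolding in_set_conv_nth by blast
    obtain q where q: "q < length (drop k al)" "drop k al ! q = y"
      using hy unfolding in_set_conv_nth by blast
    have "x = al ! p" "y = al ! (k + q)" "p < k + q" "k + q < length al" using p q by auto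
    then show ?thesis using sa by (simp add: sorted_wrt_iff_nth_less)
  qed
  have s1: "sorted_wrt (>) (take (k-1) al @ drop k al)"
    using sa cross by (simp add: sorted_wrt_append sorted_wrt_take sorted_wrt_drop)
  have s2: "sorted_wrt (>) (map (\<lambda>x. x + z1) (take (k-1) al @ drop k al))"
    using s1 by (simp only: sorted_wrt_map add_less_cancel_right)
  show "sorted_wrt (>) (betaof z1 z2 k al)"
    unfolding betaof_def using s2 z by (auto simp: sorted_wrt_append)
  have kk: "k - 1 < length al" using la k by simp
  have "sum_list al = sum_list (take (k-1) al) + al!(k-1) + sum_list (drop k al)"
  proof -
    have e: "take (k-1) al @ al!(k-1) # drop (Suc (k-1)) al = al"
      using id_take_nth_drop[OF kk] by (rule sym)
    have "sum_list (take (k-1) al @ al!(k-1) # drop (Suc (k-1)) al) =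
        sum_list (take (k-1) al) + al!(k-1) + sum_list (drop (Suc (k-1)) al)" by simp
    then show ?thesis unfolding e using k by simp
  qed
  moreover have "length (take (k-1) al @ drop k al) = n - 1" using la k by simp
  ultimately show "sum_list (betaof z1 z2 k al) + al!(k-1) = sum_list al + (n-1)*z1 + z2"
    unfolding betaof_def by (simp add: sum_list_map_plus) (metis add_mult_distrib)
qed

locale asymdata =
  fixes z1 z2 k n :: nat
  assumes z: "z2 < z1" and k1: "1 \<le> k" and kn: "k \<le> n"
begin

lemma fd: "length al = n \<Longrightarrow> sorted_wrt (>) al \<Longrightarrow> frobdata n al (betaof z1 z2 k al)"
  using betaof_props[OF _ _ k1 kn z, of al] k1 kn by unfold_locales auto

lemma bij_Phi: "bij_betw (Phi z1 z2 k n) {al. length al = n \<and> sorted_wrt (>) al}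
   {mu. asymmetric z1 z2 k mu \<and> frob_rank mu = n}"
proof (rule bij_betw_byWitness[where f'=frob_alpha])
  show "\<forall>al\<in>{al. length al = n \<and> sorted_wrt (>) al}. frob_alpha (Phi z1 z2 k n al) = al"
    using frobdata.frob_constr[OF fd] by (simp add: Phi_def)
  show "Phi z1 z2 k n ` {al. length al = n \<and> sorted_wrt (>) al} \<subseteq> {mu. asymmetric z1 z2 k mu \<and> frob_rank mu = n}"
  proof
    fix nu assume "nu \<in> Phi z1 z2 k n ` {al. length al = n \<and> sorted_wrt (>) al}"
    then obtain al where al: "length al = n" "sorted_wrt (>) al" and nu: "nu = Phi z1 z2 k n al" by auto
    note f = frobdata.frob_constr[OF fd[OF al]]
    have "asymmetric z1 z2 k (Phi z1 z2 k n al) \<and> frob_rank (Phi z1 z2 k n al) = n"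
      unfolding asymmetric_def Phi_def using f frobdata.constr_partition[OF fd[OF al]] al k1 kn
      by (simp add: betaof_def)
    then show "nu \<in> {mu. asymmetric z1 z2 k mu \<and> frob_rank mu = n}" using nu by simp
  qed
  show "frob_alpha ` {mu. asymmetric z1 z2 k mu \<and> frob_rank mu = n} \<subseteq> {al. length al = n \<and> sorted_wrt (>) al}"
    by (auto simp: asymmetric_def)
  show "\<forall>mu\<in>{mu. asymmetric z1 z2 k mu \<and> frob_rank mu = n}. Phi z1 z2 k n (frob_alpha mu) = mu"
  proof
    fix mu assume "mu \<in> {mu. asymmetric z1 z2 k mu \<and> frob_rank mu = n}"
    then have mu: "asymmetric z1 z2 k mu" "frob_rank mu = n" by auto
    let ?al = "frob_alpha mu"
    have al: "length ?al = n" "sorted_wrt (>) ?al" using mu by (auto simp: asymmetric_def)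
    have pm: "is_partition mu" using mu by (simp add: asymmetric_def)
    have fb: "frob_beta mu = betaof z1 z2 k ?al" using mu by (simp add: asymmetric_def betaof_def)
    show "Phi z1 z2 k n ?al = mu"
      unfolding Phi_def
    proof (rule partition_eqI[OF frobdata.constr_partition[OF fd[OF al]] pm])
      fix i j :: nat assume i: "1 \<le> i" and j: "1 \<le> j"
      show "j \<le> part (constr n ?al (betaof z1 z2 k ?al)) i \<longleftrightarrow> j \<le> part mu i"
        using frobdata.char_constr[OF fd[OF al] i j] char_frob[OF pm i j] fb mu(2) by simp
    qed
  qed
qed

lemma psize_Phi:
  assumes al: "length al = n" "sorted_wrt (>) al"
  shows "psize (Phi z1 z2 k n al) + al!(k-1) = n + 2 * sum_list al + (n-1)*z1 + z2"
  using frobdata.psize_constr[OF fd[OF al]] betaof_props(3)[OF al k1 kn z] by (simp add: Phi_def)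

definition E where "E = z2 + z1*(n-1) + n*(n-1) + k"

definition F where "F = Phi z1 z2 k n \<circ> toa"

lemma bij_F: "bij_betw F {d. length d = n} {mu. asymmetric z1 z2 k mu \<and> frob_rank mu = n}"
  unfolding F_def by (rule bij_betw_trans[OF bij_toa bij_Phi])

lemma psize_F: "length d = n \<Longrightarrow> psize (F d) = E + wt (wts k n) d"
proof -
  assume d: "length d = n"
  have al: "length (toa d) = n" "sorted_wrt (>) (toa d)" using d toa_sdec by auto
  have "psize (F d) + toa d ! (k-1) = n + 2 * sum_list (toa d) + (n-1)*z1 + z2"
    using psize_Phi[OF al] by (simp add: F_def)
  moreover have "wt (wts k n) d + toa d ! (k - 1) + n * (n - 1) + k = 2 * sum_list (toa d) + n"
    by (rule weight_identity[OF d k1 kn])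
  moreover have "z1*(n-1) = (n-1)*z1" by simp
  ultimately show ?thesis unfolding E_def by linarith
qed

lemma wts_pos: "0 \<notin> set (wts k n)"
  by (auto simp: wts_def)

lemma count_set:
  "{mu. asymmetric z1 z2 k mu \<and> frob_rank mu = n \<and> psize mu = m} =
    F ` {d. length d = length (wts k n) \<and> E + wt (wts k n) d = m}"
proof -
  have "{mu. asymmetric z1 z2 k mu \<and> frob_rank mu = n \<and> psize mu = m} =
      {mu \<in> F ` {d. length d = n}. psize mu = m}"
    using bij_betw_imp_surj_on[OF bij_F] by auto
  also have "\<dots> = F ` {d. length d = length (wts k n) \<and> E + wt (wts k n) d = m}"
    using psize_F by auto
  finally show ?thesis .
qed

lemma count_card:
  "card {mu. asymmetric z1 z2 k mu \<and> frob_rank mu = n \<and> psize mu = m} =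
     (if E \<le> m then cnt (wts k n) (m - E) else 0)"
  "finite {mu. asymmetric z1 z2 k mu \<and> frob_rank mu = n \<and> psize mu = m}"
proof -
  have inj: "inj_on F {d. length d = length (wts k n) \<and> E + wt (wts k n) d = m}"
    using bij_betw_imp_inj_on[OF bij_F] by (rule inj_on_subset) auto
  have eq: "{d. length d = length (wts k n) \<and> E + wt (wts k n) d = m} =
     (if E \<le> m then {d. length d = length (wts k n) \<and> wt (wts k n) d = m - E} else {})"
    by auto
  have fin: "finite {d. length d = length (wts k n) \<and> E + wt (wts k n) d = m}"
    unfolding eq using cnt_finite[OF wts_pos] by simp
  show "card {mu. asymmetric z1 z2 k mu \<and> frob_rank mu = n \<and> psize mu = m} =
     (if E \<le> m then cnt (wts k n) (m - E) else 0)"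
    unfolding count_set card_image[OF inj] by (subst eq) (simp add: cnt_def)
  show "finite {mu. asymmetric z1 z2 k mu \<and> frob_rank mu = n \<and> psize mu = m}"
    unfolding count_set using fin by simp
qed

lemma E_ge: "n \<le> E"
proof -
  have "n - 1 \<le> n * (n - 1)" using kn by (cases n) auto
  then show ?thesis unfolding E_def using k1 by linarith
qed

lemma denom:
  "(\<Prod>j\<in>{1..<k}. 1 - fps_X ^ (2 * j)) * (\<Prod>j\<in>{k..n}. 1 - fps_X ^ (2 * j - 1)) =
   (prod_list (map (\<lambda>x. 1 - fps_X ^ x) (wts k n)) :: rat fps)"
proof -
  let ?g = "\<lambda>j. (1 - fps_X ^ (if j < k then 2*j else 2*j - 1) :: rat fps)"
  have "(prod_list (map (\<lambda>x. 1 - fps_X ^ x) (wts k n)) :: rat fps) = prod_list (map ?g [1..<n+1])"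
    by (simp add: wts_def comp_def del: upt_Suc)
  also have "\<dots> = prod ?g {1..<n+1}"
    by (subst prod.distinct_set_conv_list[symmetric]) (simp_all only: distinct_upt set_upt)
  also have "{1..<n+1} = {1..<k} \<union> {k..n}" using k1 kn by auto
  also have "prod ?g ({1..<k} \<union> {k..n}) = prod ?g {1..<k} * prod ?g {k..n}"
    by (rule prod.union_disjoint) auto
  also have "prod ?g {1..<k} = (\<Prod>j\<in>{1..<k}. 1 - fps_X ^ (2 * j))"
    by (rule prod.cong) auto
  also have "prod ?g {k..n} = (\<Prod>j\<in>{k..n}. 1 - fps_X ^ (2 * j - 1))"
    by (rule prod.cong) auto
  finally show ?thesis by simp
qed

lemma exponent:
  "nat (int z2 + int z1 * (int n - 1) + int n + int n * (int n - 2) + int k) = E"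
proof -
  obtain n' where n': "n = Suc n'" using k1 kn by (cases n) auto
  have "int z2 + int z1 * (int n - 1) + int n + int n * (int n - 2) + int k = int (z2 + z1*(n-1) + n*(n-1) + k)"
    unfolding n' by (simp add: algebra_simps)
  then have "int z2 + int z1 * (int n - 1) + int n + int n * (int n - 2) + int k = int E"
    by (simp add: E_def)
  then show ?thesis by simp
qed

lemma rhs_eq:
  "rhs_term z1 z2 k n = Abs_fps (\<lambda>m. of_nat (card {mu. asymmetric z1 z2 k mu \<and> frob_rank mu = n \<and> psize mu = m}))"
proof -
  let ?Q = "(prod_list (map (\<lambda>x. 1 - fps_X ^ x) (wts k n)) :: rat fps)"
  let ?G = "Abs_fps (\<lambda>m. of_nat (cnt (wts k n) m) :: rat)"
  have QG: "?Q * ?G = 1" using cnt_fps[OF wts_pos] by (simp add: mult.commute)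
  have Q0: "fps_nth ?Q 0 \<noteq> 0"
  proof
    assume "fps_nth ?Q 0 = 0"
    then have "fps_nth (?Q * ?G) 0 = 0" by (simp add: fps_mult_nth_0)
    then show False using QG by simp
  qed
  have inv: "inverse ?Q = ?G" by (rule fps_inverse_unique[OF QG])
  have "rhs_term z1 z2 k n = fps_X ^ E / ?Q"
    unfolding rhs_term_def exponent denom ..
  also have "\<dots> = fps_X ^ E * ?G" using Q0 inv by (simp add: fps_divide_unit)
  also have "\<dots> = Abs_fps (\<lambda>m. of_nat (card {mu. asymmetric z1 z2 k mu \<and> frob_rank mu = n \<and> psize mu = m}))"
    by (intro fps_ext) (simp add: fps_X_power_mult_nth count_card(1) not_less)
  finally show ?thesis .
qed

end


lemma B_empty:
  assumes "z2 < z1" "1 \<le> k" "k \<le> n" "mu \<in> {mu. asymmetric z1 z2 k mu \<and> frob_rank mu = n \<and> psize mu = m}"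
  shows "n \<le> m"
proof -
  interpret asymdata z1 z2 k n using assms by unfold_locales auto
  obtain d where "E + wt (wts k n) d = m" using assms(4) unfolding count_set by auto
  then show ?thesis using E_ge by linarith
qed

theorem corollary6p2:
  fixes z1 z2 k :: nat
  assumes "z2 < z1" and "1 \<le> k"
  shows "(\<lambda>i. rhs_term z1 z2 k (k + i)) sums asym_gf z1 z2 k"
proof -
  define B where "B n m = {mu. asymmetric z1 z2 k mu \<and> frob_rank mu = n \<and> psize mu = m}" for n m
  define c where "c n m = card (B n m)" for n m
  have ad: "asymdata z1 z2 k n" if "k \<le> n" for n using assms that by unfold_locales auto
  have rhs: "rhs_term z1 z2 k n = Abs_fps (\<lambda>m. of_nat (c n m))" if "k \<le> n" for n
    using asymdata.rhs_eq[OF ad[OF that]] by (simp add: c_def B_def)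
  have finB: "finite (B n m)" if "k \<le> n" for n m
    using asymdata.count_card(2)[OF ad[OF that]] by (simp add: B_def)
  have c0: "c n m = 0" if "k \<le> n" "m < n" for n m
  proof -
    have "B n m = {}" using B_empty[OF assms that(1)] that(2) unfolding B_def by force
    then show ?thesis by (simp add: c_def)
  qed
  have gf: "fps_nth (asym_gf z1 z2 k) m = of_nat (\<Sum>n\<in>{k..m}. c n m)" for m
  proof -
    have "{mu \<in> asym_set z1 z2 k. psize mu = m} = (\<Union>n\<in>{k..m}. B n m)"
    proof
      show "{mu \<in> asym_set z1 z2 k. psize mu = m} \<subseteq> (\<Union>n\<in>{k..m}. B n m)"
      proof
        fix mu assume mu: "mu \<in> {mu \<in> asym_set z1 z2 k. psize mu = m}"
        then have "k \<le> frob_rank mu" by (simp add: asym_set_def asymmetric_def)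
        moreover have "frob_rank mu \<le> m"
          using B_empty[OF assms \<open>k \<le> frob_rank mu\<close>, of mu m] mu by (simp add: asym_set_def)
        ultimately show "mu \<in> (\<Union>n\<in>{k..m}. B n m)" using mu by (auto simp: B_def asym_set_def)
      qed
      show "(\<Union>n\<in>{k..m}. B n m) \<subseteq> {mu \<in> asym_set z1 z2 k. psize mu = m}"
        by (auto simp: B_def asym_set_def)
    qed
    moreover have "card (\<Union>n\<in>{k..m}. B n m) = (\<Sum>n\<in>{k..m}. c n m)"
      unfolding c_def by (rule card_UN_disjoint) (use finB in \<open>auto simp: B_def\<close>)
    ultimately show ?thesis by (simp add: asym_gf_def)
  qed
  show ?thesis
    unfolding sums_def
  proof (rule tendsto_fpsI)
    fix m
    show "\<forall>\<^sub>F N in sequentially. fps_nth (\<Sum>i<N. rhs_term z1 z2 k (k + i)) m = fps_nth (asym_gf z1 z2 k) m"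
      unfolding eventually_sequentially
    proof (intro exI allI impI)
      fix N assume N: "Suc m \<le> N"
      have "fps_nth (\<Sum>i<N. rhs_term z1 z2 k (k + i)) m = (\<Sum>i<N. of_nat (c (k + i) m))"
        by (simp add: fps_sum_nth rhs)
      also have "\<dots> = of_nat (\<Sum>i<N. c (k + i) m)" by simp
      also have "(\<Sum>i<N. c (k + i) m) = (\<Sum>n\<in>{0 + k..<N + k}. c n m)"
        by (subst sum.shift_bounds_nat_ivl) (simp add: lessThan_atLeast0 add.commute)
      also have "\<dots> = (\<Sum>n\<in>{k..m}. c n m)"
        by (rule sum.mono_neutral_right) (use N c0 in auto)
      finally show "fps_nth (\<Sum>i<N. rhs_term z1 z2 k (k + i)) m = fps_nth (asym_gf z1 z2 k) m"
        using gf by simp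
    qed
  qed
qed

end
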